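(* Let $p^{\mathcal S}(c,x)$ and $p^{\mathcal T}(c,x)$ be the data distributions of the source and target tasks. Define $$D^{ST}_{\mathrm{trace}}=2\sup_{\theta\in\Theta}\bigl|\mathcal R^{\mathcal S}_{\theta}-\mathcal R^{\mathcal T}_{\theta}\bigr|,$$ $$D^{ST}_{\mathrm{TV}}=2\,\mathrm{TV}(p^{\mathcal T}_c,p^{\mathcal S}_c)+2\,\mathbb E_{c\sim p^{\mathcal S}_c}\bigl[\mathrm{TV}\bigl(p^{\mathcal T}(\cdot|c),p^{\mathcal S}(\cdot|c)\bigr)\bigr].$$ Then both $D^{ST}=D^{ST}_{\mathrm{trace}}$ and $D^{ST}=D^{ST}_{\mathrm{TV}}$ satisfy the dissimilarity inequality $$d^{\mathcal T}(\theta,\theta^{\mathcal T}_* )\le d^{\mathcal S}(\theta,\theta^{\mathcal S}_* )+D^{ST}\quad\text{for all }\theta\in\Theta,$$ i.e. the tasks are $D^{ST}$-dissimilar for either choice. Moreover, $D^{ST}_{\mathrm{trace}}\le D^{ST}_{\mathrm{TV}}$.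
   Context: Setting: $\mathcal X$ is a finite set of classical inputs, labels are $c\in\{0,1\}$. $\Theta$ is an arbitrary set of embedding parameters and, for each $\theta\in\Theta$ and $x\in\mathcal X$, $\rho_\theta(x)$ is a density matrix (positive semidefinite, unit trace) on $\mathbb C^n$. $\mathcal M$ is the set of binary POVMs $M=(M_0,M_1)$ with $M_0,M_1\succeq0$ and $M_0+M_1=I$. The loss is $\ell_{\theta,M}(c,x)=1-\mathrm{Tr}(M_c\rho_\theta(x))$. For a task $\mathcal A\in\{\mathcal S,\mathcal T\}$ with joint distribution $p^{\mathcal A}(c,x)$ on $\{0,1\}\times\mathcal X$ (label marginal $p^{\mathcal A}_c$, input marginal $p^{\mathcal A}(x)$, conditionals $p^{\mathcal A}(x|c)$), the expected risk is $\mathcal R^{\mathcal A}_{\theta,M}=\mathbb E_{p^{\mathcal A}(c,x)}[\ell_{\theta,M}(c,x)]$ and $\mathcal R^{\mathcal A}_\theta=\min_{M\in\mathcal M}\mathcal R^{\mathcal A}_{\theta,M}$. Assume $\theta^{\mathcal A}_*\in\arg\min_{\theta\in\Theta}\mathcal R^{\mathcal A}_\theta$ exists. The task-based distance is $d^{\mathcal A}(\theta,\theta')=|\mathcal R^{\mathcal A}_{\theta'}-\mathcal R^{\mathcal A}_\theta|$. $\mathrm{TV}(p,q)=\tfrac12\sum_x|p(x)-q(x)|$ is the total variation distance. *)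

theory Defs
  imports "HOL-Analysis.Analysis"
begin

type_synonym 'n cmat = "complex^'n^'n"

definition mtrace :: "'n::finite cmat \<Rightarrow> complex" where
  "mtrace A = (\<Sum>i\<in>UNIV. A $ i $ i)"

definition psd :: "'n::finite cmat \<Rightarrow> bool" where
  "psd A = (\<forall>v::complex^'n.
      Im (\<Sum>i\<in>UNIV. \<Sum>j\<in>UNIV. cnj (v $ i) * A $ i $ j * v $ j) = 0 \<and>
      0 \<le> Re (\<Sum>i\<in>UNIV. \<Sum>j\<in>UNIV. cnj (v $ i) * A $ i $ j * v $ j))"

definition density_matrix :: "'n::finite cmat \<Rightarrow> bool" where
  "density_matrix \<rho> = (psd \<rho> \<and> mtrace \<rho> = 1)"

definition POVMs :: "('n::finite cmat \<times> 'n cmat) set" where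
  "POVMs = {M. psd (fst M) \<and> psd (snd M) \<and> fst M + snd M = mat 1}"

definition povm_el :: "('n::finite cmat \<times> 'n cmat) \<Rightarrow> nat \<Rightarrow> 'n cmat" where
  "povm_el M c = (if c = 0 then fst M else snd M)"

text \<open>Labels are c \<in> {0,1}; a joint distribution is p :: nat => 'x => real on {0,1} x 'x.\<close>
definition labels :: "nat set" where "labels = {0, 1}"

definition is_joint_dist :: "(nat \<Rightarrow> 'x::finite \<Rightarrow> real) \<Rightarrow> bool" where
  "is_joint_dist p = ((\<forall>c\<in>labels. \<forall>x. 0 \<le> p c x) \<and> (\<Sum>c\<in>labels. \<Sum>x\<in>UNIV. p c x) = 1)"

definition loss :: "('n::finite cmat \<times> 'n cmat) \<Rightarrow> 'n cmat \<Rightarrow> nat \<Rightarrow> real" where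
  "loss M \<rho> c = 1 - Re (mtrace (povm_el M c ** \<rho>))"

definition risk_M ::
  "(nat \<Rightarrow> 'x::finite \<Rightarrow> real) \<Rightarrow> ('t \<Rightarrow> 'x \<Rightarrow> 'n::finite cmat) \<Rightarrow> 't
     \<Rightarrow> ('n cmat \<times> 'n cmat) \<Rightarrow> real" where
  "risk_M p \<rho> \<theta> M = (\<Sum>c\<in>labels. \<Sum>x\<in>UNIV. p c x * loss M (\<rho> \<theta> x) c)"

definition risk ::
  "(nat \<Rightarrow> 'x::finite \<Rightarrow> real) \<Rightarrow> ('t \<Rightarrow> 'x \<Rightarrow> 'n::finite cmat) \<Rightarrow> 't \<Rightarrow> real" where
  "risk p \<rho> \<theta> = (INF M\<in>POVMs. risk_M p \<rho> \<theta> M)"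

definition task_dist ::
  "(nat \<Rightarrow> 'x::finite \<Rightarrow> real) \<Rightarrow> ('t \<Rightarrow> 'x \<Rightarrow> 'n::finite cmat) \<Rightarrow> 't \<Rightarrow> 't \<Rightarrow> real" where
  "task_dist p \<rho> \<theta> \<theta>' = \<bar>risk p \<rho> \<theta>' - risk p \<rho> \<theta>\<bar>"

definition TV :: "('a \<Rightarrow> real) \<Rightarrow> ('a \<Rightarrow> real) \<Rightarrow> 'a set \<Rightarrow> real" where
  "TV f g S = (1/2) * (\<Sum>x\<in>S. \<bar>f x - g x\<bar>)"

definition label_marg :: "(nat \<Rightarrow> 'x::finite \<Rightarrow> real) \<Rightarrow> nat \<Rightarrow> real" where
  "label_marg p c = (\<Sum>x\<in>UNIV. p c x)"

text \<open>Conditional p(x|c) = p(c,x)/p_c (with the HOL convention r/0 = 0).\<close>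
definition cond :: "(nat \<Rightarrow> 'x::finite \<Rightarrow> real) \<Rightarrow> nat \<Rightarrow> 'x \<Rightarrow> real" where
  "cond p c x = p c x / label_marg p c"

definition D_trace ::
  "(nat \<Rightarrow> 'x::finite \<Rightarrow> real) \<Rightarrow> (nat \<Rightarrow> 'x \<Rightarrow> real) \<Rightarrow> 't set
     \<Rightarrow> ('t \<Rightarrow> 'x \<Rightarrow> 'n::finite cmat) \<Rightarrow> real" where
  "D_trace pS pT \<Theta> \<rho> = 2 * (SUP \<theta>\<in>\<Theta>. \<bar>risk pS \<rho> \<theta> - risk pT \<rho> \<theta>\<bar>)"

definition D_TV :: "(nat \<Rightarrow> 'x::finite \<Rightarrow> real) \<Rightarrow> (nat \<Rightarrow> 'x \<Rightarrow> real) \<Rightarrow> real" where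
  "D_TV pS pT = 2 * TV (label_marg pT) (label_marg pS) labels
     + 2 * (\<Sum>c\<in>labels. label_marg pS c * TV (cond pT c) (cond pS c) UNIV)"

end

theory Submission
  imports Defs
begin


definition sf :: "'n::finite cmat \<Rightarrow> complex^'n \<Rightarrow> complex^'n \<Rightarrow> complex" where
  "sf A u v = (\<Sum>i\<in>UNIV. \<Sum>j\<in>UNIV. cnj (u $ i) * A $ i $ j * v $ j)"

lemma psd_sf: "psd A \<longleftrightarrow> (\<forall>v. Im (sf A v v) = 0 \<and> 0 \<le> Re (sf A v v))"
  by (simp add: psd_def sf_def)

lemma sf_add_left: "sf A (u + w) v = sf A u v + sf A w v"
  by (simp add: sf_def algebra_simps sum.distrib)
lemma sf_add_right: "sf A u (v + w) = sf A u v + sf A u w"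
  by (simp add: sf_def algebra_simps sum.distrib)

definition ev :: "'n::finite \<Rightarrow> complex \<Rightarrow> complex^'n" where
  "ev k s = (\<chi> l. if l = k then s else 0)"

lemma sf_ev_left: "sf A (ev k s) v = cnj s * (\<Sum>j\<in>UNIV. A $ k $ j * v $ j)"
proof -
  have "sf A (ev k s) v = (\<Sum>i\<in>UNIV. if i = k then cnj s * (\<Sum>j\<in>UNIV. A $ k $ j * v $ j) else 0)"
    unfolding sf_def by (rule sum.cong) (auto simp: ev_def sum_distrib_left mult.assoc)
  then show ?thesis by simp
qed
lemma sf_ev_right: "sf A u (ev k s) = s * (\<Sum>i\<in>UNIV. cnj (u $ i) * A $ i $ k)"
  by (simp add: sf_def ev_def if_distrib sum_distrib_left mult.commute mult.left_commute cong: if_cong)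
lemma sf_ev_ev: "sf A (ev k s) (ev l t) = cnj s * t * A $ k $ l"
proof -
  have "(\<Sum>j\<in>UNIV. A $ k $ j * ev l t $ j) = (\<Sum>j\<in>UNIV. if j = l then A $ k $ l * t else 0)"
    by (rule sum.cong) (auto simp: ev_def)
  then show ?thesis by (simp add: sf_ev_left)
qed

lemma sf_two: "sf A (ev i a + ev j b) (ev i a + ev j b) =
   cnj a * a * A$i$i + cnj a * b * A$i$j + cnj b * a * A$j$i + cnj b * b * A$j$j"
  by (simp add: sf_add_left sf_add_right sf_ev_ev)

lemma psd_diag: assumes "psd A" shows "Im (A$k$k) = 0" "0 \<le> Re (A$k$k)"
  using assms sf_ev_ev[of A k 1 k 1] unfolding psd_sf by (metis mult_1 complex_cnj_one)+

lemma psd_herm: assumes "psd A" shows "A$i$j = cnj (A$j$i)"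
proof (cases "i = j")
  case True then show ?thesis using psd_diag[OF assms, of i] by (simp add: complex_eq_iff)
next
  case False
  have 1: "Im (sf A (ev i 1 + ev j 1) (ev i 1 + ev j 1)) = 0" using assms unfolding psd_sf by blast
  have 2: "Im (sf A (ev i 1 + ev j \<i>) (ev i 1 + ev j \<i>)) = 0" using assms unfolding psd_sf by blast
  have d: "Im (A$i$i) = 0" "Im (A$j$j) = 0" using psd_diag[OF assms] by auto
  from 1 2 d show ?thesis unfolding sf_two by (simp add: complex_eq_iff)
qed

lemma psd_zero: assumes "psd A" "A$k$k = 0" shows "A$k$j = 0"
proof (rule ccontr)
  assume nz: "A$k$j \<noteq> 0"
  define a where "a = cmod (A$k$j) ^ 2"
  have apos: "a > 0" using nz by (simp add: a_def)
  define t where "t = (Re (A$j$j) + 1) / (2 * a)"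
  define s where "s = - of_real t * A$k$j"
  have kj: "k \<noteq> j" using nz assms(2) by auto
  have h: "A$j$k = cnj (A$k$j)" using psd_herm[OF assms(1)] by blast
  have "0 \<le> Re (sf A (ev k s + ev j 1) (ev k s + ev j 1))" using assms(1) unfolding psd_sf by blast
  also have "Re (sf A (ev k s + ev j 1) (ev k s + ev j 1)) = Re (A$j$j) - 2 * t * a"
    unfolding sf_two using assms(2) h
    by (simp add: s_def a_def cmod_power2 algebra_simps) (simp add: power2_eq_square algebra_simps)
  also have "\<dots> = -1" using apos by (simp add: t_def field_simps)
  finally show False by simp
qed

lemma sum_ev: "(\<Sum>j\<in>UNIV. f j * ev k s $ j) = f k * s"
proof -
  have "(\<Sum>j\<in>UNIV. f j * ev k s $ j) = (\<Sum>j\<in>UNIV. if j = k then f k * s else 0)"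
    by (rule sum.cong) (auto simp: ev_def)
  then show ?thesis by simp
qed

definition schur :: "'n::finite cmat \<Rightarrow> 'n \<Rightarrow> 'n cmat" where
  "schur B k = (\<chi> i j. B$i$j - B$i$k * B$k$j / B$k$k)"

lemma sf_schur: "sf (schur B k) v v = sf B v v -
   (\<Sum>i\<in>UNIV. cnj (v$i) * B$i$k) * (\<Sum>j\<in>UNIV. B$k$j * v$j) / B$k$k"
proof -
  have "sf (schur B k) v v = (\<Sum>i\<in>UNIV. \<Sum>j\<in>UNIV. cnj (v $ i) * B $ i $ j * v $ j
       - (cnj (v$i) * B$i$k) * (B$k$j * v$j) / B$k$k)"
    unfolding sf_def schur_def by (simp add: algebra_simps)
  also have "\<dots> = sf B v v - (\<Sum>i\<in>UNIV. \<Sum>j\<in>UNIV. (cnj (v$i) * B$i$k) * (B$k$j * v$j)) / B$k$k"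
    unfolding sf_def by (simp add: sum_subtractf sum_divide_distrib)
  also have "(\<Sum>i\<in>UNIV. \<Sum>j\<in>UNIV. (cnj (v$i) * B$i$k) * (B$k$j * v$j)) =
     (\<Sum>i\<in>UNIV. cnj (v$i) * B$i$k) * (\<Sum>j\<in>UNIV. B$k$j * v$j)"
    by (simp add: sum_product)
  finally show ?thesis .
qed

lemma psd_schur: assumes "psd B" "B$k$k \<noteq> 0" shows "psd (schur B k)"
proof -
  define r where "r = Re (B$k$k)"
  have Bkk: "B$k$k = of_real r" using psd_diag[OF assms(1), of k] by (simp add: r_def complex_eq_iff)
  have rpos: "r > 0" using psd_diag(2)[OF assms(1), of k] assms(2) Bkk by auto
  show ?thesis unfolding psd_sf
  proof
    fix v
    define \<beta> where "\<beta> = (\<Sum>j\<in>UNIV. B$k$j * v$j)"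
    have cb: "(\<Sum>i\<in>UNIV. cnj (v$i) * B$i$k) = cnj \<beta>"
      unfolding \<beta>_def by (simp add: psd_herm[OF assms(1), of _ k] mult.commute)
    define s where "s = - \<beta> / B$k$k"
    have l: "sf B v (ev k s) = s * cnj \<beta>" using cb by (simp add: sf_ev_right)
    have "sf (schur B k) v v = sf B (v + ev k s) (v + ev k s)"
      unfolding sf_schur sf_add_left sf_add_right sf_ev_ev sf_ev_left l cb \<beta>_def[symmetric]
      using rpos by (simp add: s_def Bkk field_simps sum_ev)
    then show "Im (sf (schur B k) v v) = 0 \<and> 0 \<le> Re (sf (schur B k) v v)"
      using assms(1) unfolding psd_sf by simp
  qed
qed

lemma mtrace_mult: "mtrace (A ** B) = (\<Sum>i\<in>UNIV. \<Sum>j\<in>UNIV. A$i$j * B$j$i)"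
  by (simp add: mtrace_def matrix_matrix_mult_def)

lemma tr_schur: assumes "psd B"
  shows "mtrace (A ** B) = mtrace (A ** schur B k) + sf A (\<chi> j. B$j$k) (\<chi> j. B$j$k) / B$k$k"
proof -
  have "mtrace (A ** B) = (\<Sum>i\<in>UNIV. \<Sum>j\<in>UNIV. A$i$j * (schur B k)$j$i
      + cnj (B$i$k) * A$i$j * B$j$k / B$k$k)"
    unfolding mtrace_mult
  proof (intro sum.cong refl)
    fix i j
    have "B$j$i = schur B k $j$i + B$j$k * B$k$i / B$k$k" by (simp add: schur_def)
    also have "B$k$i = cnj (B$i$k)" using psd_herm[OF assms] .
    finally show "A$i$j * B$j$i = A$i$j * (schur B k)$j$i + cnj (B$i$k) * A$i$j * B$j$k / B$k$k"
      by (simp add: distrib_left mult_ac)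
  qed
  also have "\<dots> = mtrace (A ** schur B k) + sf A (\<chi> j. B$j$k) (\<chi> j. B$j$k) / B$k$k"
    unfolding mtrace_mult sf_def by (simp add: sum.distrib sum_divide_distrib)
  finally show ?thesis .
qed

lemma tr_nonneg_aux:
  assumes "finite S" "psd A"
  shows "psd B \<Longrightarrow> (\<forall>i j. i \<notin> S \<or> j \<notin> S \<longrightarrow> B$i$j = 0) \<Longrightarrow> 0 \<le> Re (mtrace (A ** B))"
  using assms(1)
proof (induction S arbitrary: B rule: finite_induct)
  case empty
  then have "B = 0" by (simp add: vec_eq_iff)
  then show ?case by (simp add: mtrace_def matrix_matrix_mult_def)
next
  case (insert k S)
  show ?case
  proof (cases "B$k$k = 0")
    case True
    have z1: "B$k$j = 0" for j using psd_zero[OF insert.prems(1) True] .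
    have z2: "B$j$k = 0" for j using psd_herm[OF insert.prems(1), of j k] z1 by simp
    have "\<forall>i j. i \<notin> S \<or> j \<notin> S \<longrightarrow> B$i$j = 0" using insert.prems(2) z1 z2 by (metis insert_iff)
    then show ?thesis using insert.IH insert.prems(1) by blast
  next
    case False
    define r where "r = Re (B$k$k)"
    have Bkk: "B$k$k = of_real r" using psd_diag[OF insert.prems(1), of k] by (simp add: r_def complex_eq_iff)
    have rpos: "r > 0" using psd_diag(2)[OF insert.prems(1), of k] False Bkk by auto
    have ps: "psd (schur B k)" using psd_schur[OF insert.prems(1) False] .
    have "\<forall>i j. i \<notin> S \<or> j \<notin> S \<longrightarrow> (schur B k)$i$j = 0"
    proof (intro allI impI)
      fix i j assume ij: "i \<notin> S \<or> j \<notin> S"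
      show "(schur B k)$i$j = 0"
      proof (cases "i = k")
        case True then show ?thesis using False by (simp add: schur_def)
      next
        case ik: False
        show ?thesis
        proof (cases "j = k")
          case True then show ?thesis using False by (simp add: schur_def)
        next
          case jk: False
          have "B$i$j = 0" "B$i$k = 0 \<or> B$k$j = 0" using insert.prems(2) ij ik jk by auto
          then show ?thesis by (auto simp: schur_def)
        qed
      qed
    qed
    then have 1: "0 \<le> Re (mtrace (A ** schur B k))" using insert.IH ps by blast
    have 2: "0 \<le> Re (sf A (\<chi> j. B$j$k) (\<chi> j. B$j$k) / B$k$k)"
      using assms(2) rpos unfolding psd_sf Bkk by (simp add: Re_divide_of_real)
    show ?thesis using 1 2 tr_schur[OF insert.prems(1), of A k] by simp
  qed
qed

lemma tr_nonneg: "psd A \<Longrightarrow> psd B \<Longrightarrow> 0 \<le> Re (mtrace (A ** B))"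
  using tr_nonneg_aux[of UNIV A B] by simp



lemma psd_zero_mat: "psd (0::'n::finite cmat)" by (simp add: psd_def)
lemma psd_id: "psd (mat 1 :: 'n::finite cmat)"
proof -
  have "(\<Sum>i\<in>UNIV. \<Sum>j\<in>UNIV. cnj (v $ i) * (mat 1 :: 'n cmat) $ i $ j * v $ j) = (\<Sum>i\<in>UNIV. of_real (cmod (v$i) ^ 2))" for v :: "complex^'n"
  proof (rule sum.cong[OF refl])
    fix i
    have "(\<Sum>j\<in>UNIV. cnj (v $ i) * (mat 1 :: 'n cmat) $ i $ j * v $ j) = (\<Sum>j\<in>UNIV. if j = i then cnj (v$i) * v$i else 0)"
      by (rule sum.cong) (auto simp: mat_def)
    then show "(\<Sum>j\<in>UNIV. cnj (v $ i) * (mat 1 :: 'n cmat) $ i $ j * v $ j) = of_real (cmod (v$i) ^ 2)"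
        using complex_norm_square[of "v$i"] by (simp add: mult.commute)
  qed
  then show ?thesis unfolding psd_def by (simp add: sum_nonneg)
qed

lemma POVMs_ne: "(mat 1, 0) \<in> POVMs" by (simp add: POVMs_def psd_id psd_zero_mat)

lemma loss_bounds:
  assumes "density_matrix \<rho>" "M \<in> POVMs" "c \<in> labels"
  shows "0 \<le> loss M \<rho> c" "loss M \<rho> c \<le> 1"
proof -
  have p: "psd (fst M)" "psd (snd M)" "fst M + snd M = mat 1" using assms(2) by (auto simp: POVMs_def)
  have r: "psd \<rho>" "mtrace \<rho> = 1" using assms(1) by (auto simp: density_matrix_def)
  have "mtrace ((fst M + snd M) ** \<rho>) = mtrace (fst M ** \<rho>) + mtrace (snd M ** \<rho>)"
    by (simp add: mtrace_mult algebra_simps sum.distrib)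
  then have "mtrace (fst M ** \<rho>) + mtrace (snd M ** \<rho>) = 1" using p(3) r(2) by simp
  then have s: "Re (mtrace (fst M ** \<rho>)) + Re (mtrace (snd M ** \<rho>)) = 1"
    by (metis one_complex.sel(1) plus_complex.sel(1))
  have n: "0 \<le> Re (mtrace (fst M ** \<rho>))" "0 \<le> Re (mtrace (snd M ** \<rho>))"
    using tr_nonneg p r by auto
  show "0 \<le> loss M \<rho> c" "loss M \<rho> c \<le> 1"
    using s n assms(3) by (auto simp: loss_def povm_el_def labels_def)
qed

lemma marg_cond: assumes "\<forall>x. 0 \<le> p c x" shows "p c x = label_marg p c * cond p c x"
proof (cases "label_marg p c = 0")
  case True
  then have "\<forall>x\<in>UNIV. p c x = 0" using assms by (simp add: label_marg_def sum_nonneg_eq_0_iff)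
  then show ?thesis by (simp add: cond_def)
qed (simp add: cond_def)

lemma cond_nonneg: assumes "\<forall>x. 0 \<le> p c x" shows "0 \<le> cond p c x"
  using assms by (simp add: cond_def label_marg_def sum_nonneg)

lemma cond_sum: assumes "\<forall>x. 0 \<le> p c x" shows "(\<Sum>x\<in>UNIV. cond p c x) \<le> 1"
proof -
  have "(\<Sum>x\<in>UNIV. cond p c x) = label_marg p c / label_marg p c"
    unfolding cond_def by (simp add: label_marg_def sum_divide_distrib[symmetric])
  then show ?thesis by (cases "label_marg p c = 0") auto
qed

lemma per_label:
  assumes "\<forall>x. 0 \<le> pS c x" "\<forall>x. 0 \<le> pT c x"
  shows "(\<Sum>x\<in>UNIV. \<bar>pS c x - pT c x\<bar>) \<le>
     2 * (label_marg pS c * TV (cond pT c) (cond pS c) UNIV) + \<bar>label_marg pT c - label_marg pS c\<bar>"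
proof -
  let ?a = "label_marg pS c" and ?b = "label_marg pT c"
  have a0: "0 \<le> ?a" using assms by (simp add: label_marg_def sum_nonneg)
  have "\<bar>pS c x - pT c x\<bar> \<le> ?a * \<bar>cond pT c x - cond pS c x\<bar> + \<bar>?b - ?a\<bar> * cond pT c x" for x
  proof -
    have "pS c x - pT c x = ?a * (cond pS c x - cond pT c x) + (?a - ?b) * cond pT c x"
      using marg_cond[where p=pS and c=c and x=x, OF assms(1)] marg_cond[where p=pT and c=c and x=x, OF assms(2)] by (simp add: algebra_simps)
    also have "\<bar>\<dots>\<bar> \<le> \<bar>?a * (cond pS c x - cond pT c x)\<bar> + \<bar>(?a - ?b) * cond pT c x\<bar>" by (rule abs_triangle_ineq)
    also have "\<dots> = ?a * \<bar>cond pT c x - cond pS c x\<bar> + \<bar>?b - ?a\<bar> * cond pT c x"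
      using a0 cond_nonneg[where p=pT and c=c, OF assms(2)] by (simp add: abs_mult abs_minus_commute)
    finally show ?thesis .
  qed
  then have "(\<Sum>x\<in>UNIV. \<bar>pS c x - pT c x\<bar>) \<le> (\<Sum>x\<in>UNIV. ?a * \<bar>cond pT c x - cond pS c x\<bar> + \<bar>?b - ?a\<bar> * cond pT c x)"
    by (rule sum_mono)
  also have "\<dots> = ?a * (\<Sum>x\<in>UNIV. \<bar>cond pT c x - cond pS c x\<bar>) + \<bar>?b - ?a\<bar> * (\<Sum>x\<in>UNIV. cond pT c x)"
    by (simp add: sum.distrib sum_distrib_left)
  also have "\<dots> \<le> ?a * (\<Sum>x\<in>UNIV. \<bar>cond pT c x - cond pS c x\<bar>) + \<bar>?b - ?a\<bar> * 1"
    using cond_sum[where p=pT and c=c, OF assms(2)] by (intro add_left_mono mult_left_mono) auto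
  finally show ?thesis by (simp add: TV_def)
qed

lemma total_bound:
  assumes "is_joint_dist pS" "is_joint_dist pT"
  shows "(\<Sum>c\<in>labels. \<Sum>x\<in>UNIV. \<bar>pS c x - pT c x\<bar>) \<le> D_TV pS pT"
proof -
  have "(\<Sum>c\<in>labels. \<Sum>x\<in>UNIV. \<bar>pS c x - pT c x\<bar>) \<le>
     (\<Sum>c\<in>labels. 2 * (label_marg pS c * TV (cond pT c) (cond pS c) UNIV) + \<bar>label_marg pT c - label_marg pS c\<bar>)"
    using assms by (intro sum_mono per_label) (auto simp: is_joint_dist_def)
  also have "\<dots> = D_TV pS pT"
    by (simp add: D_TV_def TV_def sum.distrib sum_distrib_left)
  finally show ?thesis .
qed

lemma risk_M_diff:
  assumes "is_joint_dist pS" "is_joint_dist pT" "\<forall>x. density_matrix (\<rho> \<theta> x)" "M \<in> POVMs"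
  shows "\<bar>risk_M pS \<rho> \<theta> M - risk_M pT \<rho> \<theta> M\<bar> \<le> D_TV pS pT / 2"
proof -
  let ?f = "\<lambda>c x. loss M (\<rho> \<theta> x) c"
  have fb: "c \<in> labels \<Longrightarrow> \<bar>?f c x - 1/2\<bar> \<le> 1/2" for c x
    using loss_bounds[OF assms(3)[rule_format, of x] assms(4), of c] by (auto simp: abs_if)
  have s: "(\<Sum>c\<in>labels. \<Sum>x\<in>UNIV. pS c x) = 1" "(\<Sum>c\<in>labels. \<Sum>x\<in>UNIV. pT c x) = 1"
    using assms(1,2) by (auto simp: is_joint_dist_def)
  have "risk_M pS \<rho> \<theta> M - risk_M pT \<rho> \<theta> M =
      (\<Sum>c\<in>labels. \<Sum>x\<in>UNIV. (pS c x - pT c x) * (?f c x - 1/2)) +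
      (1/2) * ((\<Sum>c\<in>labels. \<Sum>x\<in>UNIV. pS c x) - (\<Sum>c\<in>labels. \<Sum>x\<in>UNIV. pT c x))"
    unfolding risk_M_def
    by (simp add: algebra_simps sum.distrib sum_subtractf sum_distrib_left) (simp add: sum_divide_distrib[symmetric])
  also have "\<dots> = (\<Sum>c\<in>labels. \<Sum>x\<in>UNIV. (pS c x - pT c x) * (?f c x - 1/2))" using s by simp
  also have "\<bar>\<dots>\<bar> \<le> (\<Sum>c\<in>labels. \<Sum>x\<in>UNIV. \<bar>(pS c x - pT c x) * (?f c x - 1/2)\<bar>)"
    by (rule order_trans[OF sum_abs sum_mono]) (rule sum_abs)
  also have "\<dots> \<le> (\<Sum>c\<in>labels. \<Sum>x\<in>UNIV. \<bar>pS c x - pT c x\<bar> * (1/2))"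
    unfolding abs_mult using fb by (intro sum_mono mult_left_mono) auto
  also have "\<dots> = (\<Sum>c\<in>labels. \<Sum>x\<in>UNIV. \<bar>pS c x - pT c x\<bar>) / 2"
    by (simp add: sum_divide_distrib)
  also have "\<dots> \<le> D_TV pS pT / 2" using total_bound[OF assms(1,2)] by simp
  finally show ?thesis .
qed

lemma risk_M_nonneg:
  assumes "is_joint_dist p" "\<forall>x. density_matrix (\<rho> \<theta> x)" "M \<in> POVMs"
  shows "0 \<le> risk_M p \<rho> \<theta> M"
  unfolding risk_M_def using assms loss_bounds(1)[OF assms(2)[rule_format] assms(3)]
  by (intro sum_nonneg mult_nonneg_nonneg) (auto simp: is_joint_dist_def)

lemma inf_diff:
  fixes a b :: "'m \<Rightarrow> real"
  assumes "P \<noteq> {}" "\<forall>M\<in>P. \<bar>a M - b M\<bar> \<le> D" "\<forall>M\<in>P. 0 \<le> a M" "\<forall>M\<in>P. 0 \<le> b M"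
  shows "\<bar>(INF M\<in>P. a M) - (INF M\<in>P. b M)\<bar> \<le> D"
proof -
  have ba: "bdd_below (a ` P)" "bdd_below (b ` P)" using assms(3,4) by (auto intro: bdd_belowI2)
  have 1: "(INF M\<in>P. a M) - D \<le> (INF M\<in>P. b M)"
  proof -
    have "(INF M\<in>P. a M) \<le> (INF M\<in>P. b M) + D"
    proof -
      have "(INF M\<in>P. a M) - D \<le> (INF M\<in>P. b M)"
      proof (rule cINF_greatest[OF assms(1)])
        fix M assume "M \<in> P"
        then show "(INF M\<in>P. a M) - D \<le> b M" using cINF_lower[OF ba(1), of M] assms(2) by force
      qed
      then show ?thesis by simp
    qed
    then show ?thesis by simp
  qed
  have 2: "(INF M\<in>P. b M) - D \<le> (INF M\<in>P. a M)"
  proof (rule cINF_greatest[OF assms(1)])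
    fix M assume "M \<in> P"
    then show "(INF M\<in>P. b M) - D \<le> a M" using cINF_lower[OF ba(2), of M] assms(2) by force
  qed
  show ?thesis using 1 2 by linarith
qed

lemma risk_diff:
  assumes "is_joint_dist pS" "is_joint_dist pT" "\<forall>x. density_matrix (\<rho> \<theta> x)"
  shows "\<bar>risk pS \<rho> \<theta> - risk pT \<rho> \<theta>\<bar> \<le> D_TV pS pT / 2"
  unfolding risk_def
  using POVMs_ne risk_M_diff[where \<rho>=\<rho> and \<theta>=\<theta>, OF assms] risk_M_nonneg[where \<rho>=\<rho> and \<theta>=\<theta>, OF assms(1,3)] risk_M_nonneg[where \<rho>=\<rho> and \<theta>=\<theta>, OF assms(2,3)]
  by (intro inf_diff) auto


lemma generic_dissim:
  assumes "\<forall>\<theta>\<in>\<Theta>. \<bar>risk pS \<rho> \<theta> - risk pT \<rho> \<theta>\<bar> \<le> D / 2"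
    and "\<theta>S \<in> \<Theta>" and "\<forall>\<theta>\<in>\<Theta>. risk pS \<rho> \<theta>S \<le> risk pS \<rho> \<theta>"
    and "\<theta>T \<in> \<Theta>" and "\<forall>\<theta>\<in>\<Theta>. risk pT \<rho> \<theta>T \<le> risk pT \<rho> \<theta>"
    and "\<theta> \<in> \<Theta>"
  shows "task_dist pT \<rho> \<theta> \<theta>T \<le> task_dist pS \<rho> \<theta> \<theta>S + D"
proof -
  have a: "\<bar>risk pS \<rho> \<theta> - risk pT \<rho> \<theta>\<bar> \<le> D / 2" using assms(1,6) by blast
  have b: "\<bar>risk pS \<rho> \<theta>T - risk pT \<rho> \<theta>T\<bar> \<le> D / 2" using assms(1,4) by blast
  have c: "risk pS \<rho> \<theta>S \<le> risk pS \<rho> \<theta>T" using assms(3,4) by blast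
  have d: "risk pT \<rho> \<theta>T \<le> risk pT \<rho> \<theta>" using assms(5,6) by blast
  have e: "task_dist pT \<rho> \<theta> \<theta>T = risk pT \<rho> \<theta> - risk pT \<rho> \<theta>T"
    unfolding task_dist_def using d by linarith
  have f: "risk pS \<rho> \<theta> - risk pS \<rho> \<theta>S \<le> task_dist pS \<rho> \<theta> \<theta>S"
    unfolding task_dist_def by linarith
  show ?thesis using a b c e f unfolding abs_le_iff by linarith
qed

theorem theorem3p1:
  fixes pS pT :: "nat \<Rightarrow> 'x::finite \<Rightarrow> real"
    and \<Theta> :: "'t set"
    and \<rho> :: "'t \<Rightarrow> 'x \<Rightarrow> 'n::finite cmat"
    and \<theta>S \<theta>T :: 't
  assumes "is_joint_dist pS" and "is_joint_dist pT"
    and "\<forall>\<theta>\<in>\<Theta>. \<forall>x. density_matrix (\<rho> \<theta> x)"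
    and "\<theta>S \<in> \<Theta>" and "\<forall>\<theta>\<in>\<Theta>. risk pS \<rho> \<theta>S \<le> risk pS \<rho> \<theta>"
    and "\<theta>T \<in> \<Theta>" and "\<forall>\<theta>\<in>\<Theta>. risk pT \<rho> \<theta>T \<le> risk pT \<rho> \<theta>"
  shows "(\<forall>\<theta>\<in>\<Theta>. task_dist pT \<rho> \<theta> \<theta>T \<le> task_dist pS \<rho> \<theta> \<theta>S + D_trace pS pT \<Theta> \<rho>)
       \<and> (\<forall>\<theta>\<in>\<Theta>. task_dist pT \<rho> \<theta> \<theta>T \<le> task_dist pS \<rho> \<theta> \<theta>S + D_TV pS pT)
       \<and> D_trace pS pT \<Theta> \<rho> \<le> D_TV pS pT"
proof -
  have rd: "\<forall>\<theta>\<in>\<Theta>. \<bar>risk pS \<rho> \<theta> - risk pT \<rho> \<theta>\<bar> \<le> D_TV pS pT / 2"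
  proof
    fix \<theta> assume h: "\<theta> \<in> \<Theta>"
    show "\<bar>risk pS \<rho> \<theta> - risk pT \<rho> \<theta>\<bar> \<le> D_TV pS pT / 2"
      by (rule risk_diff[OF assms(1,2)]) (use assms(3) h in blast)
  qed
  have bdd: "bdd_above ((\<lambda>\<theta>. \<bar>risk pS \<rho> \<theta> - risk pT \<rho> \<theta>\<bar>) ` \<Theta>)"
    by (rule bdd_aboveI2[where M="D_TV pS pT / 2"]) (use rd in blast)
  have tr: "\<forall>\<theta>\<in>\<Theta>. \<bar>risk pS \<rho> \<theta> - risk pT \<rho> \<theta>\<bar> \<le> D_trace pS pT \<Theta> \<rho> / 2"
  proof
    fix \<theta> assume h: "\<theta> \<in> \<Theta>"
    have "\<bar>risk pS \<rho> \<theta> - risk pT \<rho> \<theta>\<bar> \<le> (SUP \<theta>\<in>\<Theta>. \<bar>risk pS \<rho> \<theta> - risk pT \<rho> \<theta>\<bar>)"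
      by (rule cSUP_upper[OF h bdd])
    then show "\<bar>risk pS \<rho> \<theta> - risk pT \<rho> \<theta>\<bar> \<le> D_trace pS pT \<Theta> \<rho> / 2"
      unfolding D_trace_def by linarith
  qed
  have ne: "\<Theta> \<noteq> {}" using assms(4) by blast
  have "(SUP \<theta>\<in>\<Theta>. \<bar>risk pS \<rho> \<theta> - risk pT \<rho> \<theta>\<bar>) \<le> D_TV pS pT / 2"
    by (rule cSUP_least[OF ne]) (use rd in blast)
  then have 3: "D_trace pS pT \<Theta> \<rho> \<le> D_TV pS pT"
    unfolding D_trace_def by linarith
  have 1: "\<forall>\<theta>\<in>\<Theta>. task_dist pT \<rho> \<theta> \<theta>T \<le> task_dist pS \<rho> \<theta> \<theta>S + D_trace pS pT \<Theta> \<rho>"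
    using generic_dissim[OF tr assms(4-7)] by blast
  have 2: "\<forall>\<theta>\<in>\<Theta>. task_dist pT \<rho> \<theta> \<theta>T \<le> task_dist pS \<rho> \<theta> \<theta>S + D_TV pS pT"
    using generic_dissim[OF rd assms(4-7)] by blast
  show ?thesis using 1 2 3 by blast
qed


end
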